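(* Let $\mu\in P$. (i) If $\omega\in P^+$ is minuscule, then $\mu_++w_\mu\omega\in P^+$. (iia) If $\mu_++w_\mu\alpha_0\notin P^+$, then $w_\mu\alpha_0=-\alpha_j$ for some $1\le j\le n$, and moreover $\langle\mu_+,\alpha_j^\vee\rangle=1$. (iib) If $\mu_++w_\mu\alpha_0\in P^+$ and $w_\mu\alpha_0\in R^-$, then $\langle\mu_+,(w_\mu\alpha_0)^\vee\rangle\le-2$.
   Context: Let $R$ be an irreducible reduced crystallographic root system of rank $n$ spanning a real Euclidean space $V$ with inner product $\langle\cdot,\cdot\rangle$; $\alpha^\vee:=2\alpha/\langle\alpha,\alpha\rangle$; $P$ the weight lattice; $R^+$ positive roots with simple roots $\alpha_1,\dots,\alpha_n$, $R^-:=-R^+$; $P^+$ the dominant weights; $\alpha_0\in R^+$ the root such that $\alpha_0^\vee$ is the highest root of $R^\vee$. A weight $\omega\in P^+$ is minuscule if $\omega\ne0$ and $\langle\omega,\alpha^\vee\rangle\in\{0,1\}$ for all $\alpha\in R^+$. $W_0$ is the finite Weyl group; for $\mu\in P$, $w_\mu$ is the shortest element of $W_0$ with $w_\mu\mu\in P^+$ and $\mu_+:=w_\mu\mu$. *)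

theory Defs
  imports "HOL-Analysis.Analysis"
begin

definition coroot :: "'a::euclidean_space \<Rightarrow> 'a" where
  "coroot \<alpha> = (2 / (\<alpha> \<bullet> \<alpha>)) *\<^sub>R \<alpha>"

definition refl :: "'a::euclidean_space \<Rightarrow> 'a \<Rightarrow> 'a" where
  "refl \<alpha> v = v - (v \<bullet> coroot \<alpha>) *\<^sub>R \<alpha>"

definition root_system :: "'a::euclidean_space set \<Rightarrow> bool" where
  "root_system R \<longleftrightarrow> finite R \<and> 0 \<notin> R \<and> span R = UNIV \<and>
     (\<forall>\<alpha>\<in>R. refl \<alpha> ` R = R)"

definition crystallographic :: "'a::euclidean_space set \<Rightarrow> bool" where
  "crystallographic R \<longleftrightarrow> (\<forall>\<alpha>\<in>R. \<forall>\<beta>\<in>R. \<beta> \<bullet> coroot \<alpha> \<in> \<int>)"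

definition reduced :: "'a::euclidean_space set \<Rightarrow> bool" where
  "reduced R \<longleftrightarrow> (\<forall>\<alpha>\<in>R. \<forall>c::real. c *\<^sub>R \<alpha> \<in> R \<longrightarrow> c = 1 \<or> c = -1)"

definition irreducible_rs :: "'a::euclidean_space set \<Rightarrow> bool" where
  "irreducible_rs R \<longleftrightarrow> R \<noteq> {} \<and> (\<forall>R1 R2. R1 \<union> R2 = R \<longrightarrow> R1 \<inter> R2 = {} \<longrightarrow>
      (\<forall>\<alpha>\<in>R1. \<forall>\<beta>\<in>R2. \<alpha> \<bullet> \<beta> = 0) \<longrightarrow> R1 = {} \<or> R2 = {})"

definition is_base :: "'a::euclidean_space set \<Rightarrow> 'a set \<Rightarrow> bool" where
  "is_base R S \<longleftrightarrow> S \<subseteq> R \<and> independent S \<and>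
     (\<forall>\<beta>\<in>R. \<exists>c::'a \<Rightarrow> int. \<beta> = (\<Sum>\<alpha>\<in>S. of_int (c \<alpha>) *\<^sub>R \<alpha>) \<and>
        ((\<forall>\<alpha>\<in>S. c \<alpha> \<ge> 0) \<or> (\<forall>\<alpha>\<in>S. c \<alpha> \<le> 0)))"

definition nonneg_int_comb :: "'a::euclidean_space set \<Rightarrow> 'a set" where
  "nonneg_int_comb S = {v. \<exists>c::'a \<Rightarrow> int. (\<forall>\<alpha>\<in>S. c \<alpha> \<ge> 0) \<and> v = (\<Sum>\<alpha>\<in>S. of_int (c \<alpha>) *\<^sub>R \<alpha>)}"

definition pos_roots :: "'a::euclidean_space set \<Rightarrow> 'a set \<Rightarrow> 'a set" where
  "pos_roots R S = R \<inter> nonneg_int_comb S"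

definition neg_roots :: "'a::euclidean_space set \<Rightarrow> 'a set \<Rightarrow> 'a set" where
  "neg_roots R S = uminus ` pos_roots R S"

definition weights :: "'a::euclidean_space set \<Rightarrow> 'a set" where
  "weights R = {x. \<forall>\<alpha>\<in>R. x \<bullet> coroot \<alpha> \<in> \<int>}"

definition dominant :: "'a::euclidean_space set \<Rightarrow> 'a set \<Rightarrow> 'a set" where
  "dominant R S = {x\<in>weights R. \<forall>\<alpha>\<in>pos_roots R S. x \<bullet> coroot \<alpha> \<ge> 0}"

definition minuscule :: "'a::euclidean_space set \<Rightarrow> 'a set \<Rightarrow> 'a \<Rightarrow> bool" where
  "minuscule R S \<omega> \<longleftrightarrow> \<omega> \<in> dominant R S \<and> \<omega> \<noteq> 0 \<and>
     (\<forall>\<alpha>\<in>pos_roots R S. \<omega> \<bullet> coroot \<alpha> \<in> {0, 1})"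

text \<open>alpha0: the positive root whose coroot is the highest root of the dual root system
  R^vee (with respect to the base S^vee).\<close>
definition is_alpha0 :: "'a::euclidean_space set \<Rightarrow> 'a set \<Rightarrow> 'a \<Rightarrow> bool" where
  "is_alpha0 R S \<alpha>0 \<longleftrightarrow> \<alpha>0 \<in> pos_roots R S \<and>
     (\<forall>\<beta>\<in>R. coroot \<alpha>0 - coroot \<beta> \<in> nonneg_int_comb (coroot ` S))"

inductive_set weyl :: "'a::euclidean_space set \<Rightarrow> ('a \<Rightarrow> 'a) set" for R where
  weyl_id: "id \<in> weyl R"
| weyl_step: "w \<in> weyl R \<Longrightarrow> \<alpha> \<in> R \<Longrightarrow> refl \<alpha> \<circ> w \<in> weyl R"

definition refl_word :: "'a::euclidean_space list \<Rightarrow> 'a \<Rightarrow> 'a" where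
  "refl_word as = foldr (\<lambda>\<alpha> f. refl \<alpha> \<circ> f) as id"

definition weyl_length :: "'a::euclidean_space set \<Rightarrow> ('a \<Rightarrow> 'a) \<Rightarrow> nat" where
  "weyl_length S w = (LEAST k. \<exists>as. set as \<subseteq> S \<and> length as = k \<and> w = refl_word as)"

text \<open>w is w_mu: a shortest element of W_0 mapping mu into P^+ (it is unique).\<close>
definition is_w_mu :: "'a::euclidean_space set \<Rightarrow> 'a set \<Rightarrow> 'a \<Rightarrow> ('a \<Rightarrow> 'a) \<Rightarrow> bool" where
  "is_w_mu R S \<mu> w \<longleftrightarrow> w \<in> weyl R \<and> w \<mu> \<in> dominant R S \<and>
     (\<forall>v\<in>weyl R. v \<mu> \<in> dominant R S \<longrightarrow> weyl_length S w \<le> weyl_length S v)"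

end

theory Submission
  imports Defs
begin


lemma indep_uniq:
  fixes S :: "'a::euclidean_space set"
  assumes "finite S" "independent S" "(\<Sum>b\<in>S. f b *\<^sub>R b) = (\<Sum>b\<in>S. g b *\<^sub>R b)" "a \<in> S"
  shows "f a = g a"
proof -
  have "(\<Sum>b\<in>S. (f b - g b) *\<^sub>R b) = 0"
    using assms(3) by (simp add: scaleR_diff_left sum_subtractf)
  then show ?thesis using assms(2,4) unfolding independent_explicit by auto
qed

lemma inner_coroot: "y \<bullet> coroot x = (2 / (x \<bullet> x)) * (y \<bullet> x)"
  by (simp add: coroot_def)

lemma coroot_neg[simp]: "coroot (- x) = - coroot x"
  by (simp add: coroot_def)

lemma coroot_self: "x \<noteq> 0 \<Longrightarrow> x \<bullet> coroot x = 2"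
  by (simp add: coroot_def)

lemma coroot_coroot: "x \<noteq> 0 \<Longrightarrow> coroot (coroot x) = x"
  by (simp add: coroot_def field_simps)

lemma coroot_eq0: "coroot x = 0 \<longleftrightarrow> x = 0"
  by (simp add: coroot_def)

lemma coroot_inj: "x \<noteq> 0 \<Longrightarrow> y \<noteq> 0 \<Longrightarrow> coroot x = coroot y \<Longrightarrow> x = y"
  by (metis coroot_coroot)

lemma sign_coroot:
  assumes "x \<noteq> 0"
  shows "(y \<bullet> coroot x \<ge> 0) \<longleftrightarrow> (y \<bullet> x \<ge> 0)" "(y \<bullet> coroot x > 0) \<longleftrightarrow> (y \<bullet> x > 0)"
    "(y \<bullet> coroot x = 0) \<longleftrightarrow> (y \<bullet> x = 0)"
proof -
  have p: "2 / (x \<bullet> x) > 0" using assms by simp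
  show "(y \<bullet> coroot x \<ge> 0) \<longleftrightarrow> (y \<bullet> x \<ge> 0)" unfolding inner_coroot
    using mult_le_cancel_left_pos[OF p, of 0 "y \<bullet> x"] by simp
  show "(y \<bullet> coroot x > 0) \<longleftrightarrow> (y \<bullet> x > 0)" unfolding inner_coroot
    using mult_less_cancel_left_pos[OF p, of 0 "y \<bullet> x"] by simp
  show "(y \<bullet> coroot x = 0) \<longleftrightarrow> (y \<bullet> x = 0)" unfolding inner_coroot
    using p by simp
qed

lemma refl_alt: "refl a v = v - (v \<bullet> a) *\<^sub>R coroot a"
  by (simp add: refl_def coroot_def)

lemma refl_zero[simp]: "refl 0 = id"
  by (auto simp: refl_def coroot_def)

lemma refl_refl[simp]: "refl a (refl a v) = v"
proof (cases "a = 0")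
  case True then show ?thesis by simp
next
  case False
  have "a \<bullet> coroot a = 2" using False by (rule coroot_self)
  then show ?thesis by (simp add: refl_def inner_diff_left algebra_simps)
qed

lemma refl_comp_refl[simp]: "refl a \<circ> refl a = id"
  by (auto)

lemma refl_self: "a \<noteq> 0 \<Longrightarrow> refl a a = - a"
  by (simp add: refl_def coroot_self scaleR_2)

lemma refl_neg_root[simp]: "refl (- a) = refl a"
  by (auto simp: refl_def)

lemma refl_orth: "orthogonal_transformation (refl a)"
proof (cases "a = 0")
  case True then show ?thesis by (simp add: id_def)
next
  case False
  have c: "a \<bullet> coroot a = 2" using False by (rule coroot_self)
  have lin: "linear (refl a)"
    by (rule linearI) (auto simp: refl_def inner_add_left algebra_simps)
  have "refl a v \<bullet> refl a w = v \<bullet> w" for v w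
  proof -
    have "refl a v \<bullet> refl a w = v \<bullet> w - (w \<bullet> coroot a) * (v \<bullet> a) - (v \<bullet> coroot a) * (a \<bullet> w)
       + (v \<bullet> coroot a) * (w \<bullet> coroot a) * (a \<bullet> a)"
      by (simp add: refl_def inner_diff_left inner_diff_right algebra_simps)
    also have "... = v \<bullet> w" using False
      by (simp add: inner_coroot inner_commute field_simps)
    finally show ?thesis .
  qed
  then show ?thesis using lin by (simp add: orthogonal_transformation_def)
qed

lemma orth_coroot:
  assumes "orthogonal_transformation f"
  shows "coroot (f x) = f (coroot x)"
  using assms by (simp add: coroot_def orthogonal_transformation_def orthogonal_transformation_scaleR[OF assms])

lemma orth_inner_coroot:
  assumes "orthogonal_transformation f"
  shows "f y \<bullet> coroot (f x) = y \<bullet> coroot x"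
  using assms by (simp add: orth_coroot orthogonal_transformation_def)

lemma refl_conj: "refl (refl b x) = refl b \<circ> refl x \<circ> refl b"
proof
  fix v
  have o: "orthogonal_transformation (refl b)" by (rule refl_orth)
  have lin: "linear (refl b)" using o by (rule orthogonal_transformation_linear)
  have eq: "refl b v \<bullet> coroot x = v \<bullet> coroot (refl b x)"
    by (metis orth_inner_coroot[OF o] refl_refl)
  have "(refl b \<circ> refl x \<circ> refl b) v = refl b (refl b v - (refl b v \<bullet> coroot x) *\<^sub>R x)"
    by (simp add: refl_def[of x])
  also have "... = refl b (refl b v) - (refl b v \<bullet> coroot x) *\<^sub>R refl b x"
    using lin by (simp add: linear_diff linear_scale)
  also have "... = v - (v \<bullet> coroot (refl b x)) *\<^sub>R refl b x" using eq by simp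
  also have "... = refl (refl b x) v" by (simp add: refl_def[of "refl b x"])
  finally show "refl (refl b x) v = (refl b \<circ> refl x \<circ> refl b) v" ..
qed

lemma refl_word_Nil[simp]: "refl_word [] = id"
  by (simp add: refl_word_def)

lemma refl_word_Cons[simp]: "refl_word (a # as) = refl a \<circ> refl_word as"
  by (simp add: refl_word_def)

lemma refl_word_append: "refl_word (as @ bs) = refl_word as \<circ> refl_word bs"
  by (induction as) auto

lemma refl_word_weyl: "set as \<subseteq> R \<Longrightarrow> refl_word as \<in> weyl R"
  by (induction as) (auto intro: weyl.intros)

lemma weyl_orth: "w \<in> weyl R \<Longrightarrow> orthogonal_transformation w"
proof (induction rule: weyl.induct)
  case weyl_id then show ?case by (simp add: id_def)
next
  case (weyl_step w \<alpha>) then show ?case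
    using orthogonal_transformation_compose[OF refl_orth[of \<alpha>]] by blast
qed




definition rcone :: "'a::euclidean_space set \<Rightarrow> 'a set" where
  "rcone S = {v. \<exists>c. (\<forall>a\<in>S. c a \<ge> 0) \<and> v = (\<Sum>a\<in>S. c a *\<^sub>R a)}"

lemma rcone_0: "0 \<in> rcone S"
  unfolding rcone_def by (rule CollectI, rule exI[of _ "\<lambda>_. 0"]) simp

lemma rcone_add: "x \<in> rcone S \<Longrightarrow> y \<in> rcone S \<Longrightarrow> x + y \<in> rcone S"
  unfolding rcone_def
proof clarify
  fix c d :: "'a \<Rightarrow> real" assume "\<forall>a\<in>S. 0 \<le> c a" "\<forall>a\<in>S. 0 \<le> d a"
  then show "\<exists>e. (\<forall>a\<in>S. 0 \<le> e a) \<and> (\<Sum>a\<in>S. c a *\<^sub>R a) + (\<Sum>a\<in>S. d a *\<^sub>R a) = (\<Sum>a\<in>S. e a *\<^sub>R a)"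
    by (intro exI[of _ "\<lambda>a. c a + d a"]) (simp add: scaleR_add_left sum.distrib)
qed

lemma rcone_scale: "x \<in> rcone S \<Longrightarrow> t \<ge> 0 \<Longrightarrow> t *\<^sub>R x \<in> rcone S"
  unfolding rcone_def
proof clarify
  fix c :: "'a \<Rightarrow> real" assume "\<forall>a\<in>S. 0 \<le> c a" "t \<ge> 0"
  then show "\<exists>e. (\<forall>a\<in>S. 0 \<le> e a) \<and> t *\<^sub>R (\<Sum>a\<in>S. c a *\<^sub>R a) = (\<Sum>a\<in>S. e a *\<^sub>R a)"
    by (intro exI[of _ "\<lambda>a. t * c a"]) (simp add: scaleR_sum_right)
qed

lemma rcone_sum: "finite I \<Longrightarrow> (\<And>i. i \<in> I \<Longrightarrow> f i \<in> rcone S) \<Longrightarrow> sum f I \<in> rcone S"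
  by (induction I rule: finite_induct) (auto intro: rcone_0 rcone_add)

lemma delta_sum: "(a::'a::euclidean_space) \<in> S \<Longrightarrow> finite S \<Longrightarrow> (\<Sum>b\<in>S. (if b = a then 1 else 0) *\<^sub>R b) = a"
proof -
  assume "a \<in> S" "finite S"
  have "(\<Sum>b\<in>S. (if b = a then 1 else 0) *\<^sub>R b) = (\<Sum>b\<in>S. if b = a then b else 0)"
    by (rule sum.cong) auto
  then show ?thesis using \<open>a \<in> S\<close> \<open>finite S\<close> by (simp add: sum.delta)
qed

lemma rcone_mem: "a \<in> S \<Longrightarrow> finite S \<Longrightarrow> a \<in> rcone S"
  unfolding rcone_def using delta_sum[of a S]
  by (intro CollectI exI[of _ "\<lambda>b. if b = a then 1 else 0"]) auto

lemma rcone_pointed: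
  assumes "finite S" "independent S" "x \<in> rcone S" "- x \<in> rcone S"
  shows "x = 0"
proof -
  obtain c where c: "\<forall>a\<in>S. c a \<ge> 0" "x = (\<Sum>a\<in>S. c a *\<^sub>R a)" using assms(3) unfolding rcone_def by auto
  obtain d where d: "\<forall>a\<in>S. d a \<ge> 0" "- x = (\<Sum>a\<in>S. d a *\<^sub>R a)" using assms(4) unfolding rcone_def by auto
  have "(\<Sum>a\<in>S. (c a + d a) *\<^sub>R a) = (\<Sum>a\<in>S. 0 *\<^sub>R a)"
    using c d by (simp add: scaleR_add_left sum.distrib flip: c(2) d(2))
  then have "\<forall>a\<in>S. c a + d a = 0" using indep_uniq[OF assms(1,2), of "\<lambda>a. c a + d a" "\<lambda>a. 0"] by blast
  then have "\<forall>a\<in>S. c a = 0"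
  proof (intro ballI)
    fix a assume "\<forall>a\<in>S. c a + d a = 0" "a \<in> S"
    then have "c a + d a = 0" "c a \<ge> 0" "d a \<ge> 0" using c(1) d(1) by auto
    then show "c a = 0" by linarith
  qed
  then show ?thesis using c by simp
qed

lemma int_comb_rcone: "nonneg_int_comb S \<subseteq> rcone S"
proof
  fix x assume "x \<in> nonneg_int_comb S"
  then obtain c :: "'a \<Rightarrow> int" where c: "\<forall>a\<in>S. c a \<ge> 0" "x = (\<Sum>a\<in>S. of_int (c a) *\<^sub>R a)"
    unfolding nonneg_int_comb_def by auto
  then show "x \<in> rcone S" unfolding rcone_def
    by (intro CollectI exI[of _ "\<lambda>a. of_int (c a)"]) auto
qed

lemma coroot_int_comb_rcone:
  assumes "0 \<notin> S"
  shows "nonneg_int_comb (coroot ` S) \<subseteq> rcone S"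
proof
  fix x assume "x \<in> nonneg_int_comb (coroot ` S)"
  then obtain c :: "'a \<Rightarrow> int" where c: "\<forall>b\<in>coroot ` S. c b \<ge> 0"
    "x = (\<Sum>b\<in>coroot ` S. of_int (c b) *\<^sub>R b)" unfolding nonneg_int_comb_def by auto
  have inj: "inj_on coroot S" using assms by (intro inj_onI) (metis coroot_inj)
  have "x = (\<Sum>a\<in>S. of_int (c (coroot a)) *\<^sub>R coroot a)"
    using c(2) sum.reindex[OF inj] by (simp add: o_def)
  also have "... = (\<Sum>a\<in>S. (of_int (c (coroot a)) * (2 / (a \<bullet> a))) *\<^sub>R a)"
    by (simp add: coroot_def)
  finally show "x \<in> rcone S" unfolding rcone_def using c(1)
    by (auto intro!: exI[of _ "\<lambda>a. of_int (c (coroot a)) * (2 / (a \<bullet> a))"])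
qed

locale rs =
  fixes R S :: "'a::euclidean_space set"
  assumes rs: "root_system R" and cr: "crystallographic R" and red: "reduced R"
    and base: "is_base R S"
begin

abbreviation "P \<equiv> pos_roots R S"

lemma finR: "finite R" using rs by (simp add: root_system_def)
lemma nzR: "0 \<notin> R" using rs by (simp add: root_system_def)
lemma reflR: "\<alpha> \<in> R \<Longrightarrow> refl \<alpha> ` R = R" using rs by (simp add: root_system_def)
lemma refl_mem: "\<alpha> \<in> R \<Longrightarrow> \<beta> \<in> R \<Longrightarrow> refl \<alpha> \<beta> \<in> R" using reflR by blast
lemma neg_mem: "\<alpha> \<in> R \<Longrightarrow> - \<alpha> \<in> R"
proof -
  assume a: "\<alpha> \<in> R"
  then have "\<alpha> \<noteq> 0" using nzR by auto
  then have "refl \<alpha> \<alpha> = - \<alpha>" by (rule refl_self)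
  then show ?thesis using refl_mem[OF a a] by simp
qed
lemma SR: "S \<subseteq> R" using base by (simp add: is_base_def)
lemma finS: "finite S" using SR finR finite_subset by blast
lemma indS: "independent S" using base by (simp add: is_base_def)
lemma nzS: "0 \<notin> S" using SR nzR by blast
lemma intR: "\<alpha> \<in> R \<Longrightarrow> \<beta> \<in> R \<Longrightarrow> \<beta> \<bullet> coroot \<alpha> \<in> \<int>"
  using cr by (simp add: crystallographic_def)

lemma P_R: "x \<in> P \<Longrightarrow> x \<in> R" by (simp add: pos_roots_def)
lemma P_cone: "x \<in> P \<Longrightarrow> x \<in> rcone S" using int_comb_rcone by (auto simp: pos_roots_def)

lemma pointed: "x \<in> rcone S \<Longrightarrow> - x \<in> rcone S \<Longrightarrow> x = 0"
  using rcone_pointed[OF finS indS] by blast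

lemma not_both: "x \<in> P \<Longrightarrow> - x \<in> P \<Longrightarrow> False"
proof -
  assume "x \<in> P" "- x \<in> P"
  then have "x = 0" using pointed[OF P_cone P_cone] by blast
  then show False using \<open>x \<in> P\<close> P_R nzR by auto
qed

lemma S_pos: "a \<in> S \<Longrightarrow> a \<in> P"
proof -
  assume a: "a \<in> S"
  have "(\<Sum>b\<in>S. of_int (if b = a then 1 else 0::int) *\<^sub>R b) = (\<Sum>b\<in>S. (if b = a then 1 else 0) *\<^sub>R b)"
    by (rule sum.cong) auto
  also have "... = a" using delta_sum[of a S] a finS by simp
  finally have "a = (\<Sum>b\<in>S. of_int (if b = a then 1 else 0::int) *\<^sub>R b)" ..
  moreover have "\<forall>b\<in>S. (if b = a then 1 else 0::int) \<ge> 0" by simp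
  ultimately have "a \<in> nonneg_int_comb S" unfolding nonneg_int_comb_def
    by (intro CollectI exI[of _ "\<lambda>b. if b = a then 1 else 0::int"]) simp
  then show ?thesis unfolding pos_roots_def using a SR by blast
qed

lemma root_cases: "\<beta> \<in> R \<Longrightarrow> \<beta> \<in> P \<or> - \<beta> \<in> P"
proof -
  assume b: "\<beta> \<in> R"
  then obtain c :: "'a \<Rightarrow> int" where c: "\<beta> = (\<Sum>\<alpha>\<in>S. of_int (c \<alpha>) *\<^sub>R \<alpha>)"
    "(\<forall>\<alpha>\<in>S. c \<alpha> \<ge> 0) \<or> (\<forall>\<alpha>\<in>S. c \<alpha> \<le> 0)"
    using base unfolding is_base_def by blast
  show ?thesis
  proof (cases "\<forall>\<alpha>\<in>S. c \<alpha> \<ge> 0")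
    case True
    then have "\<beta> \<in> nonneg_int_comb S" unfolding nonneg_int_comb_def using c(1)
      by (intro CollectI exI[of _ c]) simp
    then show ?thesis using b unfolding pos_roots_def by blast
  next
    case False
    then have "\<forall>\<alpha>\<in>S. - c \<alpha> \<ge> 0" using c by auto
    moreover have "- \<beta> = (\<Sum>\<alpha>\<in>S. of_int (- c \<alpha>) *\<^sub>R \<alpha>)"
      using c by (simp add: sum_negf)
    ultimately have "- \<beta> \<in> nonneg_int_comb S" unfolding nonneg_int_comb_def
      by (intro CollectI exI[of _ "\<lambda>a. - c a"]) simp
    then show ?thesis using neg_mem[OF b] unfolding pos_roots_def by blast
  qed
qed

lemma int_obtain: "x \<in> \<int> \<Longrightarrow> (\<And>m::int. x = of_int m \<Longrightarrow> thesis) \<Longrightarrow> thesis"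
  by (metis Ints_cases)

lemma simple_refl_pos:
  assumes a: "a \<in> S" and e: "\<epsilon> \<in> P" "\<epsilon> \<noteq> a"
  shows "refl a \<epsilon> \<in> P"
proof -
  have aR: "a \<in> R" using a SR by blast
  have eR: "\<epsilon> \<in> R" using e P_R by blast
  obtain c :: "'a \<Rightarrow> int" where c: "\<forall>b\<in>S. c b \<ge> 0" "\<epsilon> = (\<Sum>b\<in>S. of_int (c b) *\<^sub>R b)"
    using e unfolding pos_roots_def nonneg_int_comb_def by blast
  from intR[OF aR eR] obtain m :: int where m: "\<epsilon> \<bullet> coroot a = of_int m" by (rule Ints_cases)
  define c' where "c' b = c b - (if b = a then m else 0)" for b
  have "(\<Sum>b\<in>S. of_int (c' b) *\<^sub>R b) = (\<Sum>b\<in>S. of_int (c b) *\<^sub>R b - (if b = a then of_int m *\<^sub>R b else 0))"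
    by (rule sum.cong) (auto simp: c'_def scaleR_diff_left)
  also have "... = \<epsilon> - of_int m *\<^sub>R a" using a finS
    by (simp add: sum_subtractf sum.delta c(2))
  also have "... = refl a \<epsilon>" by (simp add: refl_def m)
  finally have rc: "refl a \<epsilon> = (\<Sum>b\<in>S. of_int (c' b) *\<^sub>R b)" ..
  have rR: "refl a \<epsilon> \<in> R" using refl_mem aR eR by blast
  obtain d :: "'a \<Rightarrow> int" where d: "refl a \<epsilon> = (\<Sum>b\<in>S. of_int (d b) *\<^sub>R b)"
    "(\<forall>b\<in>S. d b \<ge> 0) \<or> (\<forall>b\<in>S. d b \<le> 0)"
    using base rR unfolding is_base_def by blast
  have dc: "d b = c' b" if "b \<in> S" for b
    using indep_uniq[OF finS indS, of "\<lambda>b. of_int (d b)" "\<lambda>b. of_int (c' b)" b] d(1) rc that by simp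
  obtain b0 where b0: "b0 \<in> S" "b0 \<noteq> a" "c b0 > 0"
  proof (rule ccontr)
    assume "\<not> thesis"
    with that have z: "\<forall>b\<in>S. b \<noteq> a \<longrightarrow> c b = 0" using c(1) by force
    have "\<epsilon> = (\<Sum>b\<in>S. if b = a then of_int (c a) *\<^sub>R a else 0)"
      unfolding c(2) by (rule sum.cong) (use z in auto)
    also have "... = of_int (c a) *\<^sub>R a" using a finS by (simp add: sum.delta)
    finally have ec: "\<epsilon> = of_int (c a) *\<^sub>R a" .
    then have "of_int (c a) *\<^sub>R a \<in> R" using eR by simp
    then have "of_int (c a) = (1::real) \<or> of_int (c a) = (-1::real)"
      using red aR unfolding reduced_def by blast
    then have "c a = 1" using c(1) a by auto
    then show False using ec e(2) by simp
  qed
  have "d b0 > 0" using dc[OF b0(1)] b0 by (simp add: c'_def)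
  then have "\<forall>b\<in>S. d b \<ge> 0" using d(2) b0(1) by force
  then show ?thesis using rR d(1) unfolding pos_roots_def nonneg_int_comb_def by blast
qed

lemma simple_refl_neg:
  assumes a: "a \<in> S" and e: "- \<epsilon> \<in> P" "\<epsilon> \<noteq> - a"
  shows "- refl a \<epsilon> \<in> P"
proof -
  have "- \<epsilon> \<noteq> a" using e(2) by auto
  then have "refl a (- \<epsilon>) \<in> P" using simple_refl_pos[OF a e(1)] by blast
  moreover have "refl a (- \<epsilon>) = - refl a \<epsilon>"
    using refl_orth[of a] by (simp add: linear_neg orthogonal_transformation_linear)
  ultimately show ?thesis by simp
qed

end



lemma refl_neg_arg: "refl a (- x) = - refl a x"
  using refl_orth[of a] by (simp add: linear_neg orthogonal_transformation_linear)

lemma refl_rw: "refl (refl_word us a) = refl_word us \<circ> refl a \<circ> refl_word (rev us)"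
proof (induction us)
  case Nil then show ?case by simp
next
  case (Cons b us)
  have "refl (refl_word (b # us) a) = refl b \<circ> refl (refl_word us a) \<circ> refl b"
    by (simp add: refl_conj)
  also have "... = refl_word (b # us) \<circ> refl a \<circ> refl_word (rev (b # us))"
    using Cons by (simp add: refl_word_append fun_eq_iff)
  finally show ?case .
qed

context rs begin

lemma weyl_R: "w \<in> weyl R \<Longrightarrow> w ` R = R"
proof (induction rule: weyl.induct)
  case weyl_id then show ?case by simp
next
  case (weyl_step w \<alpha>) then show ?case using reflR by (metis image_comp)
qed

lemma weyl_pre: "w \<in> weyl R \<Longrightarrow> \<beta> \<in> R \<Longrightarrow> \<exists>\<delta>\<in>R. w \<delta> = \<beta>"
  using weyl_R by (metis imageE)

lemma weyl_mem: "w \<in> weyl R \<Longrightarrow> \<delta> \<in> R \<Longrightarrow> w \<delta> \<in> R"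
  using weyl_R by blast

lemma rw_weyl: "set as \<subseteq> S \<Longrightarrow> refl_word as \<in> weyl R"
  using refl_word_weyl SR by blast

lemma exch:
  assumes "set as \<subseteq> S" "\<delta> \<in> R" "- \<delta> \<in> P" "refl_word as \<delta> \<in> P"
  shows "\<exists>as'. set as' \<subseteq> S \<and> length as' < length as \<and>
     refl (refl_word as \<delta>) \<circ> refl_word as = refl_word as'"
  using assms
proof (induction as)
  case Nil then show ?case using not_both by simp
next
  case (Cons a bs)
  define \<epsilon> where "\<epsilon> = refl_word bs \<delta>"
  have a: "a \<in> S" "set bs \<subseteq> S" using Cons.prems by auto
  have eR: "\<epsilon> \<in> R" unfolding \<epsilon>_def using weyl_mem[OF rw_weyl[OF a(2)] Cons.prems(2)] .
  have ra: "refl_word (a # bs) \<delta> = refl a \<epsilon>" by (simp add: \<epsilon>_def)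
  show ?case
  proof (cases "\<epsilon> \<in> P")
    case True
    obtain bs' where bs': "set bs' \<subseteq> S" "length bs' < length bs"
      "refl \<epsilon> \<circ> refl_word bs = refl_word bs'"
      using Cons.IH[OF a(2) Cons.prems(2,3)] True unfolding \<epsilon>_def by blast
    have "refl (refl_word (a # bs) \<delta>) \<circ> refl_word (a # bs) = refl a \<circ> (refl \<epsilon> \<circ> refl_word bs)"
      unfolding ra by (simp add: refl_conj fun_eq_iff)
    also have "... = refl_word (a # bs')" by (simp only: refl_word_Cons bs'(3))
    finally have eq: "refl (refl_word (a # bs) \<delta>) \<circ> refl_word (a # bs) = refl_word (a # bs')" .
    have "set (a # bs') \<subseteq> S" using bs' a by auto
    moreover have "length (a # bs') < length (a # bs)" using bs' by simp
    ultimately show ?thesis using eq by blast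
  next
    case False
    then have ne: "- \<epsilon> \<in> P" using root_cases eR by blast
    show ?thesis
    proof (cases "\<epsilon> = - a")
      case True
      have "a \<noteq> 0" using nzS a(1) by auto
      then have "refl_word (a # bs) \<delta> = a" using ra True refl_self[of a]
        by (simp add: refl_neg_arg)
      then have eq: "refl (refl_word (a # bs) \<delta>) \<circ> refl_word (a # bs) = refl_word bs"
        by (simp add: fun_eq_iff)
      have "length bs < length (a # bs)" by simp
      then show ?thesis using a(2) eq by blast
    next
      case False
      then have "- refl a \<epsilon> \<in> P" using simple_refl_neg[OF a(1) ne] by blast
      then show ?thesis using not_both Cons.prems(4) ra by auto
    qed
  qed
qed

lemma refl_coeff:
  assumes a: "a \<in> S" and b: "\<beta> = (\<Sum>b\<in>S. of_int (c b) *\<^sub>R b)" and m: "\<beta> \<bullet> coroot a = of_int m"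
  shows "refl a \<beta> = (\<Sum>b\<in>S. of_int (c b - (if b = a then m else 0)) *\<^sub>R b)"
proof -
  have "(\<Sum>b\<in>S. of_int (c b - (if b = a then m else 0)) *\<^sub>R b) =
      (\<Sum>b\<in>S. of_int (c b) *\<^sub>R b - (if b = a then of_int m *\<^sub>R b else 0))"
    by (rule sum.cong) (auto simp: scaleR_diff_left)
  also have "... = \<beta> - of_int m *\<^sub>R a" using a finS
    by (simp add: sum_subtractf sum.delta b)
  also have "... = refl a \<beta>" by (simp add: refl_def m)
  finally show ?thesis ..
qed

lemma pos_conj_aux:
  "\<forall>\<beta> c. \<beta> \<in> P \<longrightarrow> (\<forall>b\<in>S. c b \<ge> 0) \<longrightarrow> \<beta> = (\<Sum>b\<in>S. of_int (c b) *\<^sub>R b) \<longrightarrow>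
     nat (\<Sum>b\<in>S. c b) = n \<longrightarrow> (\<exists>us a. set us \<subseteq> S \<and> a \<in> S \<and> \<beta> = refl_word us a)"
proof (induction n rule: less_induct)
  case (less n)
  show ?case
  proof (intro allI impI)
    fix \<beta> and c :: "'a \<Rightarrow> int"
    assume bP: "\<beta> \<in> P" and c: "\<forall>b\<in>S. c b \<ge> 0" and bc: "\<beta> = (\<Sum>b\<in>S. of_int (c b) *\<^sub>R b)"
      and n: "nat (\<Sum>b\<in>S. c b) = n"
    show "\<exists>us a. set us \<subseteq> S \<and> a \<in> S \<and> \<beta> = refl_word us a"
    proof (cases "\<beta> \<in> S")
      case True then show ?thesis by (intro exI[of _ "[]"] exI[of _ \<beta>]) simp
    next
      case False
      have bR: "\<beta> \<in> R" using bP P_R by blast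
      have "0 < \<beta> \<bullet> \<beta>" using bR nzR by auto
      also have "\<beta> \<bullet> \<beta> = (\<Sum>b\<in>S. of_int (c b) * (\<beta> \<bullet> b))"
        by (subst (2) bc) (simp add: inner_sum_right)
      finally have pos: "0 < (\<Sum>b\<in>S. of_int (c b) * (\<beta> \<bullet> b))" .
      have "\<exists>b\<in>S. of_int (c b) * (\<beta> \<bullet> b) > 0"
      proof (rule ccontr)
        assume "\<not> ?thesis"
        then have "\<forall>b\<in>S. of_int (c b) * (\<beta> \<bullet> b) \<le> 0" by (simp add: not_less)
        then have "(\<Sum>b\<in>S. of_int (c b) * (\<beta> \<bullet> b)) \<le> 0" by (intro sum_nonpos) blast
        then show False using pos by simp
      qed
      then obtain a where a: "a \<in> S" "of_int (c a) * (\<beta> \<bullet> a) > 0" by blast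
      have aR: "a \<in> R" using a SR by blast
      have ca0: "of_int (c a) \<ge> (0::real)" using c a(1) by simp
      have "\<beta> \<bullet> a > 0" using a(2) ca0 by (simp add: zero_less_mult_iff)
      moreover have "a \<noteq> 0" using nzS a(1) by auto
      ultimately have kpos: "\<beta> \<bullet> coroot a > 0" using sign_coroot(2) by blast
      from intR[OF aR bR] obtain m :: int where m: "\<beta> \<bullet> coroot a = of_int m" by (rule Ints_cases)
      have mpos: "m > 0" using kpos m by simp
      define c' where "c' b = c b - (if b = a then m else 0)" for b
      have rc: "refl a \<beta> = (\<Sum>b\<in>S. of_int (c' b) *\<^sub>R b)"
        unfolding c'_def by (rule refl_coeff[OF a(1) bc m])
      have rP: "refl a \<beta> \<in> P" using simple_refl_pos[OF a(1) bP] False a(1) by blast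
      obtain d :: "'a \<Rightarrow> int" where d: "\<forall>b\<in>S. d b \<ge> 0" "refl a \<beta> = (\<Sum>b\<in>S. of_int (d b) *\<^sub>R b)"
        using rP unfolding pos_roots_def nonneg_int_comb_def by blast
      have dc: "d b = c' b" if "b \<in> S" for b
        using indep_uniq[OF finS indS, of "\<lambda>b. of_int (d b)" "\<lambda>b. of_int (c' b)" b] d(2) rc that by simp
      have c'pos: "\<forall>b\<in>S. c' b \<ge> 0" using d(1) dc by simp
      have "(\<Sum>b\<in>S. c' b) = (\<Sum>b\<in>S. c b) - m"
        unfolding c'_def using a(1) finS by (simp add: sum_subtractf sum.delta)
      moreover have "(\<Sum>b\<in>S. c' b) \<ge> 0" using c'pos by (simp add: sum_nonneg)
      ultimately have lt: "nat (\<Sum>b\<in>S. c' b) < n" using n mpos by linarith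
      have ex: "\<exists>us a'. set us \<subseteq> S \<and> a' \<in> S \<and> refl a \<beta> = refl_word us a'"
        by (rule less[OF lt, rule_format, OF rP _ rc refl]) (use c'pos in blast)
      then obtain us a' where ua: "set us \<subseteq> S" "a' \<in> S" "refl a \<beta> = refl_word us a'"
        by blast
      have "\<beta> = refl a (refl a \<beta>)" by simp
      also have "... = refl_word (a # us) a'" using ua(3) by simp
      finally have "\<beta> = refl_word (a # us) a'" .
      then show ?thesis using ua a by (intro exI[of _ "a # us"] exI[of _ a']) auto
    qed
  qed
qed

lemma pos_conj: "\<beta> \<in> P \<Longrightarrow> \<exists>us a. set us \<subseteq> S \<and> a \<in> S \<and> \<beta> = refl_word us a"
proof -
  assume bP: "\<beta> \<in> P"
  then obtain c :: "'a \<Rightarrow> int" where c: "\<forall>b\<in>S. c b \<ge> 0" "\<beta> = (\<Sum>b\<in>S. of_int (c b) *\<^sub>R b)"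
    unfolding pos_roots_def nonneg_int_comb_def by blast
  show ?thesis by (rule pos_conj_aux[rule_format, OF bP _ c(2) refl]) (use c(1) in blast)
qed

lemma refl_word_exists: "\<alpha> \<in> R \<Longrightarrow> \<exists>bs. set bs \<subseteq> S \<and> refl \<alpha> = refl_word bs"
proof -
  assume aR: "\<alpha> \<in> R"
  obtain \<beta> where b: "\<beta> \<in> P" "refl \<alpha> = refl \<beta>"
    using root_cases[OF aR] by (metis refl_neg_root)
  obtain us a where ua: "set us \<subseteq> S" "a \<in> S" "\<beta> = refl_word us a" using pos_conj[OF b(1)] by blast
  have "refl \<alpha> = refl_word (us @ a # rev us)"
    using b(2) ua(3) by (simp add: refl_rw refl_word_append o_assoc)
  then show ?thesis using ua by (intro exI[of _ "us @ a # rev us"]) auto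
qed

lemma weyl_word: "w \<in> weyl R \<Longrightarrow> \<exists>as. set as \<subseteq> S \<and> w = refl_word as"
proof (induction rule: weyl.induct)
  case weyl_id then show ?case by (intro exI[of _ "[]"]) simp
next
  case (weyl_step w \<alpha>)
  obtain as where as: "set as \<subseteq> S" "w = refl_word as" using weyl_step by blast
  obtain bs where bs: "set bs \<subseteq> S" "refl \<alpha> = refl_word bs" using refl_word_exists weyl_step by blast
  show ?case using as bs by (intro exI[of _ "bs @ as"]) (simp add: refl_word_append)
qed

end



lemma Ints_lt:
  assumes "(x::real) \<in> \<int>" "y \<in> \<int>" "x < y" shows "x + 1 \<le> y"
proof -
  from assms(1) obtain a :: int where a: "x = of_int a" by (rule Ints_cases)
  from assms(2) obtain b :: int where b: "y = of_int b" by (rule Ints_cases)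
  have "a < b" using assms(3) a b by simp
  then have "a + 1 \<le> b" by simp
  then have "(of_int (a + 1) :: real) \<le> of_int b" by (simp only: of_int_le_iff)
  then show ?thesis using a b by simp
qed

lemma weights_add: "x \<in> weights R \<Longrightarrow> y \<in> weights R \<Longrightarrow> x + y \<in> weights R"
  by (auto simp: weights_def inner_add_left)

context rs begin

lemma alpha0_simple:
  assumes al: "is_alpha0 R S \<alpha>0" and a: "a \<in> S"
  shows "\<alpha>0 \<bullet> a \<ge> 0"
proof (rule ccontr)
  assume neg: "\<not> \<alpha>0 \<bullet> a \<ge> 0"
  have aR: "a \<in> R" using a SR by blast
  have a0: "\<alpha>0 \<in> R" "\<alpha>0 \<noteq> 0" using al nzR unfolding is_alpha0_def pos_roots_def by auto
  have anz: "a \<noteq> 0" using a nzS by auto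
  have "coroot \<alpha>0 - coroot (refl a \<alpha>0) \<in> nonneg_int_comb (coroot ` S)"
    using al refl_mem[OF aR a0(1)] unfolding is_alpha0_def by blast
  then have inc: "coroot \<alpha>0 - coroot (refl a \<alpha>0) \<in> rcone S"
    using coroot_int_comb_rcone[OF nzS] by blast
  define t where "t = coroot \<alpha>0 \<bullet> coroot a"
  have "coroot (refl a \<alpha>0) = refl a (coroot \<alpha>0)" by (rule orth_coroot[OF refl_orth])
  then have "coroot \<alpha>0 - coroot (refl a \<alpha>0) = t *\<^sub>R a"
    by (simp add: refl_def t_def)
  moreover have "t < 0"
  proof -
    have "\<alpha>0 \<bullet> coroot a < 0" using sign_coroot(1)[OF anz, of \<alpha>0] neg by linarith
    moreover have "\<alpha>0 \<bullet> \<alpha>0 > 0" using a0(2) by simp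
    ultimately show ?thesis unfolding t_def
      by (simp add: coroot_def[of \<alpha>0] divide_neg_pos)
  qed
  ultimately have "t *\<^sub>R a \<in> rcone S" "- (t *\<^sub>R a) \<in> rcone S"
    using inc rcone_scale[OF rcone_mem[OF a finS], of "- t"] by auto
  then have "t *\<^sub>R a = 0" by (rule pointed)
  then show False using \<open>t < 0\<close> anz by simp
qed

lemma alpha0_dom:
  assumes al: "is_alpha0 R S \<alpha>0" and d: "\<delta> \<in> P"
  shows "\<alpha>0 \<bullet> coroot \<delta> \<ge> 0"
proof -
  obtain c :: "'a \<Rightarrow> int" where c: "\<forall>b\<in>S. c b \<ge> 0" "\<delta> = (\<Sum>b\<in>S. of_int (c b) *\<^sub>R b)"
    using d unfolding pos_roots_def nonneg_int_comb_def by blast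
  have "\<alpha>0 \<bullet> \<delta> = (\<Sum>b\<in>S. of_int (c b) * (\<alpha>0 \<bullet> b))" using c(2) by (simp add: inner_sum_right)
  also have "... \<ge> 0" using c(1) alpha0_simple[OF al] by (intro sum_nonneg mult_nonneg_nonneg) simp_all
  finally have ge: "\<alpha>0 \<bullet> \<delta> \<ge> 0" .
  have "\<delta> \<noteq> 0" using d P_R nzR by blast
  then show ?thesis using sign_coroot(1)[of \<delta> \<alpha>0] ge by simp
qed

lemma alpha0_H:
  assumes al: "is_alpha0 R S \<alpha>0" and g: "\<gamma> \<in> P" "\<gamma> \<noteq> \<alpha>0" and k2: "\<alpha>0 \<bullet> coroot \<gamma> \<ge> 2"
  shows False
proof -
  have a0: "\<alpha>0 \<in> R" "\<alpha>0 \<noteq> 0" "\<alpha>0 \<in> P" using al nzR unfolding is_alpha0_def pos_roots_def by auto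
  have gR: "\<gamma> \<in> R" "\<gamma> \<noteq> 0" using g P_R nzR by auto
  define k where "k = \<alpha>0 \<bullet> coroot \<gamma>"
  have hi: "coroot \<alpha>0 - coroot \<beta> \<in> rcone S" if "\<beta> \<in> R" for \<beta>
    using al that coroot_int_comb_rcone[OF nzS] unfolding is_alpha0_def by blast
  have rr: "refl \<alpha>0 (coroot \<gamma>) = coroot \<gamma> - k *\<^sub>R coroot \<alpha>0"
    using a0(2) by (simp add: refl_def k_def coroot_def[of \<alpha>0] inner_commute)
  have bR: "- refl \<alpha>0 \<gamma> \<in> R" using neg_mem refl_mem a0(1) gR(1) by blast
  have Q: "coroot \<alpha>0 + coroot \<gamma> - k *\<^sub>R coroot \<alpha>0 \<in> rcone S"
    using hi[OF bR] by (simp add: orth_coroot[OF refl_orth] rr algebra_simps)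
  have P': "coroot \<alpha>0 - coroot \<gamma> \<in> rcone S" using hi[OF gR(1)] .
  have ca: "coroot \<alpha>0 \<in> rcone S"
    unfolding coroot_def using a0(2) by (intro rcone_scale P_cone a0(3)) simp
  have s: "(coroot \<alpha>0 - coroot \<gamma>) + (coroot \<alpha>0 + coroot \<gamma> - k *\<^sub>R coroot \<alpha>0) = (2 - k) *\<^sub>R coroot \<alpha>0"
    by (simp add: algebra_simps scaleR_2)
  have "(2 - k) *\<^sub>R coroot \<alpha>0 \<in> rcone S" using rcone_add[OF P' Q] s by simp
  moreover have "- ((2 - k) *\<^sub>R coroot \<alpha>0) \<in> rcone S"
    using rcone_scale[OF ca, of "k - 2"] k2 k_def by (simp add: algebra_simps)
  ultimately have "(2 - k) *\<^sub>R coroot \<alpha>0 = 0" by (rule pointed)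
  then have "(coroot \<alpha>0 - coroot \<gamma>) + (coroot \<alpha>0 + coroot \<gamma> - k *\<^sub>R coroot \<alpha>0) = 0"
    using s by simp
  then have e: "coroot \<alpha>0 + coroot \<gamma> - k *\<^sub>R coroot \<alpha>0 = - (coroot \<alpha>0 - coroot \<gamma>)"
    by (simp only: add_eq_0_iff)
  have "- (coroot \<alpha>0 - coroot \<gamma>) \<in> rcone S" using Q unfolding e .
  then have "coroot \<alpha>0 - coroot \<gamma> = 0" using pointed[OF P'] by blast
  then have "coroot \<alpha>0 = coroot \<gamma>" by simp
  then have "\<alpha>0 = \<gamma>" by (rule coroot_inj[OF a0(2) gR(2)])
  then show False using g(2) by simp
qed

end

locale mainloc = rs +
  fixes \<alpha>0 \<mu> :: 'a and w :: "'a \<Rightarrow> 'a"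
  assumes al: "is_alpha0 R S \<alpha>0" and wmu: "is_w_mu R S \<mu> w"
begin

lemma wW: "w \<in> weyl R" using wmu by (simp add: is_w_mu_def)
lemma worth: "orthogonal_transformation w" using weyl_orth wW by blast
lemma wlin: "linear w" using worth orthogonal_transformation_linear by blast
lemma ldom: "w \<mu> \<in> dominant R S" using wmu by (simp add: is_w_mu_def)
lemma lw: "w \<mu> \<in> weights R" using ldom by (simp add: dominant_def)
lemma lpos: "\<beta> \<in> P \<Longrightarrow> w \<mu> \<bullet> coroot \<beta> \<ge> 0" using ldom by (simp add: dominant_def)
lemma lint: "\<beta> \<in> R \<Longrightarrow> w \<mu> \<bullet> coroot \<beta> \<in> \<int>" using lw by (simp add: weights_def)

lemma wneg: "w (- x) = - w x" using wlin by (simp add: linear_neg)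

lemma w_weight: "x \<in> weights R \<Longrightarrow> w x \<in> weights R"
  unfolding weights_def
proof clarify
  fix \<beta> assume x: "\<forall>\<alpha>\<in>R. x \<bullet> coroot \<alpha> \<in> \<int>" and b: "\<beta> \<in> R"
  obtain \<delta> where "\<delta> \<in> R" "w \<delta> = \<beta>" using weyl_pre[OF wW b] by blast
  then show "w x \<bullet> coroot \<beta> \<in> \<int>" using x orth_inner_coroot[OF worth, of x \<delta>] by simp
qed

lemma wlen: "\<exists>as. set as \<subseteq> S \<and> length as = weyl_length S w \<and> w = refl_word as"
proof -
  have ex: "\<exists>k as. set as \<subseteq> S \<and> length as = k \<and> w = refl_word as"
    using weyl_word[OF wW] by blast
  show ?thesis unfolding weyl_length_def by (rule LeastI_ex[OF ex])
qed

lemma key: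
  assumes g: "\<gamma> \<in> P" "- (w \<gamma>) \<in> P"
  shows "w \<mu> \<bullet> coroot (w \<gamma>) < 0"
proof -
  define \<beta> where "\<beta> = - (w \<gamma>)"
  have bP: "\<beta> \<in> P" using g \<beta>_def by simp
  have bnz: "\<beta> \<noteq> 0" using bP P_R nzR by blast
  have ge: "w \<mu> \<bullet> coroot \<beta> \<ge> 0" using lpos[OF bP] .
  have wg: "w \<gamma> = - \<beta>" using \<beta>_def by simp
  show ?thesis
  proof (rule ccontr)
    assume "\<not> ?thesis"
    then have z: "w \<mu> \<bullet> coroot \<beta> = 0" using ge wg by simp
    then have z': "w \<mu> \<bullet> \<beta> = 0" using sign_coroot(3)[OF bnz, of "w \<mu>"] by simp
    obtain c :: "'a \<Rightarrow> int" where c: "\<forall>b\<in>S. c b \<ge> 0" "\<beta> = (\<Sum>b\<in>S. of_int (c b) *\<^sub>R b)"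
      using bP unfolding pos_roots_def nonneg_int_comb_def by blast
    have tnn: "\<forall>b\<in>S. of_int (c b) * (w \<mu> \<bullet> b) \<ge> 0"
    proof
      fix b assume b: "b \<in> S"
      have "b \<noteq> 0" using b nzS by blast
      then have "w \<mu> \<bullet> b \<ge> 0" using lpos[OF S_pos[OF b]] sign_coroot(1)[of b "w \<mu>"] by simp
      then show "of_int (c b) * (w \<mu> \<bullet> b) \<ge> 0" using c(1) b by simp
    qed
    have "(\<Sum>b\<in>S. of_int (c b) * (w \<mu> \<bullet> b)) = 0" using z' c(2) by (simp add: inner_sum_right)
    then have tz: "\<forall>b\<in>S. of_int (c b) * (w \<mu> \<bullet> b) = 0"
      using sum_nonneg_eq_0_iff[OF finS, of "\<lambda>b. of_int (c b) * (w \<mu> \<bullet> b)"] tnn by simp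
    have "\<exists>b\<in>S. c b > 0 \<and> (\<exists>\<delta>\<in>R. w \<delta> = b \<and> - \<delta> \<in> P)"
    proof (rule ccontr)
      assume H: "\<not> ?thesis"
      have ex: "\<exists>\<delta>. \<delta> \<in> P \<and> w \<delta> = b" if bS: "b \<in> S" and cb: "c b > 0" for b
      proof -
        have "b \<in> R" using bS SR by blast
        then obtain \<delta> where "\<delta> \<in> R" "w \<delta> = b" using weyl_pre[OF wW] by blast
        moreover have "\<not> (- \<delta> \<in> P)" using H bS cb \<open>\<delta> \<in> R\<close> \<open>w \<delta> = b\<close> by blast
        ultimately show ?thesis using root_cases[of \<delta>] by blast
      qed
      define f where "f b = (SOME \<delta>. \<delta> \<in> P \<and> w \<delta> = b)" for b
      have f: "f b \<in> P \<and> w (f b) = b" if "b \<in> S" "c b > 0" for b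
        using someI_ex[OF ex[OF that]] unfolding f_def .
      define x where "x = (\<Sum>b\<in>S. of_int (c b) *\<^sub>R f b)"
      have xc: "x \<in> rcone S" unfolding x_def
      proof (rule rcone_sum[OF finS])
        fix b assume b: "b \<in> S"
        show "of_int (c b) *\<^sub>R f b \<in> rcone S"
        proof (cases "c b > 0")
          case True
          then have "f b \<in> rcone S" using f[OF b True] P_cone by blast
          moreover have "(0::real) \<le> of_int (c b)" using True by simp
          ultimately show ?thesis by (rule rcone_scale)
        next
          case False then have "c b = 0" using c(1) b by force
          then show ?thesis using rcone_0 by simp
        qed
      qed
      have "w x = (\<Sum>b\<in>S. of_int (c b) *\<^sub>R w (f b))"
        unfolding x_def using wlin by (simp add: linear_sum linear_scale)
      also have "... = (\<Sum>b\<in>S. of_int (c b) *\<^sub>R b)"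
      proof (rule sum.cong)
        fix b assume b: "b \<in> S"
        show "of_int (c b) *\<^sub>R w (f b) = of_int (c b) *\<^sub>R b"
        proof (cases "c b > 0")
          case True then show ?thesis using f[OF b True] by simp
        next
          case False then have "c b = 0" using c(1) b by force
          then show ?thesis by simp
        qed
      qed simp
      also have "... = w (- \<gamma>)" using c(2) wg wneg by simp
      finally have "x = - \<gamma>" using orthogonal_transformation_inj[OF worth] by (simp add: inj_eq)
      then have "- \<gamma> \<in> rcone S" using xc by simp
      then have "\<gamma> = 0" using pointed[OF P_cone[OF g(1)]] by blast
      then show False using g(1) P_R nzR by blast
    qed
    then obtain b \<delta> where b: "b \<in> S" "c b > 0" "\<delta> \<in> R" "w \<delta> = b" "- \<delta> \<in> P" by blast
    have "of_int (c b) * (w \<mu> \<bullet> b) = 0" using tz b(1) by blast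
    then have lb: "w \<mu> \<bullet> b = 0" using b(2) by simp
    have bnz': "b \<noteq> 0" using b(1) nzS by blast
    have lcb: "w \<mu> \<bullet> coroot b = 0" using lb sign_coroot(3)[OF bnz', of "w \<mu>"] by simp
    obtain as where as: "set as \<subseteq> S" "length as = weyl_length S w" "w = refl_word as"
      using wlen by blast
    have rwd: "refl_word as \<delta> = b" using as(3) b(4) by simp
    then have "refl_word as \<delta> \<in> P" using S_pos[OF b(1)] by simp
    from exch[OF as(1) b(3) b(5) this] obtain as' where as': "set as' \<subseteq> S" "length as' < length as"
      "refl (refl_word as \<delta>) \<circ> refl_word as = refl_word as'" by blast
    define v where "v = refl b \<circ> w"
    have "b \<in> R" using b(1) SR by blast
    then have vW: "v \<in> weyl R" unfolding v_def using wW by (rule weyl.weyl_step[rotated])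
    have "v \<mu> = w \<mu>" unfolding v_def using lcb by (simp add: refl_def)
    then have "v \<mu> \<in> dominant R S" using ldom by simp
    then have "weyl_length S w \<le> weyl_length S v" using wmu vW unfolding is_w_mu_def by blast
    also have "weyl_length S v \<le> length as'"
      unfolding weyl_length_def
    proof (rule Least_le)
      have "refl b \<circ> w = refl_word as'" using as'(3) rwd as(3) by simp
      then show "\<exists>as. set as \<subseteq> S \<and> length as = length as' \<and> v = refl_word as"
        using as'(1) v_def by blast
    qed
    finally show False using as'(2) as(2) by simp
  qed
qed

lemma F:
  assumes bP: "\<beta> \<in> P" and neg: "(w \<mu> + w \<alpha>0) \<bullet> coroot \<beta> < 0"
  shows "\<beta> = - (w \<alpha>0) \<and> w \<mu> \<bullet> coroot \<beta> = 1"
proof -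
  have bR: "\<beta> \<in> R" using bP P_R by blast
  have a0: "\<alpha>0 \<in> P" "\<alpha>0 \<in> R" "\<alpha>0 \<noteq> 0" using al nzR unfolding is_alpha0_def pos_roots_def by auto
  obtain \<delta> where d: "\<delta> \<in> R" "w \<delta> = \<beta>" using weyl_pre[OF wW bR] by blast
  have e1: "w \<alpha>0 \<bullet> coroot \<beta> = \<alpha>0 \<bullet> coroot \<delta>" unfolding d(2)[symmetric] by (rule orth_inner_coroot[OF worth])
  have sum: "w \<mu> \<bullet> coroot \<beta> + \<alpha>0 \<bullet> coroot \<delta> < 0" using neg e1 by (simp add: inner_add_left)
  have l0: "w \<mu> \<bullet> coroot \<beta> \<ge> 0" using lpos[OF bP] .
  show ?thesis
  proof (cases "\<delta> \<in> P")
    case True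
    then show ?thesis using alpha0_dom[OF al True] l0 sum by linarith
  next
    case False
    define \<gamma> where "\<gamma> = - \<delta>"
    have gP: "\<gamma> \<in> P" using False root_cases d(1) \<gamma>_def by blast
    have wg: "w \<gamma> = - \<beta>" using d(2) \<gamma>_def wneg by simp
    have "w \<mu> \<bullet> coroot (w \<gamma>) < 0" using key[OF gP] wg bP by simp
    then have lp: "w \<mu> \<bullet> coroot \<beta> > 0" using wg by simp
    have l1: "w \<mu> \<bullet> coroot \<beta> \<ge> 1" using Ints_lt[OF Ints_0 lint[OF bR] lp] by simp
    have gR: "\<gamma> \<in> R" using gP P_R by blast
    have ai: "\<alpha>0 \<bullet> coroot \<gamma> \<in> \<int>" using intR[OF gR a0(2)] .
    have "\<alpha>0 \<bullet> coroot \<gamma> > 1" using sum l1 \<gamma>_def by simp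
    then have "\<alpha>0 \<bullet> coroot \<gamma> \<ge> 2" using Ints_lt[OF Ints_1 ai] by simp
    then have ga: "\<gamma> = \<alpha>0" using alpha0_H[OF al gP] by blast
    have b1: "\<beta> = - w \<alpha>0" using wg ga by simp
    have "\<delta> = - \<gamma>" unfolding \<gamma>_def by simp
    then have "\<delta> = - \<alpha>0" using ga by simp
    then have "\<alpha>0 \<bullet> coroot \<delta> = -2" using coroot_self[OF a0(3)] by simp
    then have lt2: "w \<mu> \<bullet> coroot \<beta> < 2" using sum by linarith
    have "w \<mu> \<bullet> coroot \<beta> + 1 \<le> 2" by (rule Ints_lt[OF lint[OF bR] _ lt2]) simp
    then have "w \<mu> \<bullet> coroot \<beta> = 1" using l1 by linarith
    then show ?thesis using b1 by blast
  qed
qed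

lemma partii:
  assumes nd: "w \<mu> + w \<alpha>0 \<notin> dominant R S"
  shows "\<exists>\<alpha>j\<in>S. w \<alpha>0 = - \<alpha>j \<and> w \<mu> \<bullet> coroot \<alpha>j = 1"
proof -
  have a0R: "\<alpha>0 \<in> R" using al unfolding is_alpha0_def pos_roots_def by auto
  have "\<alpha>0 \<in> weights R" using intR[OF _ a0R] unfolding weights_def by blast
  then have "w \<mu> + w \<alpha>0 \<in> weights R" using weights_add lw w_weight by blast
  then obtain \<theta> where t: "\<theta> \<in> P" "(w \<mu> + w \<alpha>0) \<bullet> coroot \<theta> < 0"
    using nd unfolding dominant_def by force
  have Ft: "\<theta> = - (w \<alpha>0)" "w \<mu> \<bullet> coroot \<theta> = 1" using F[OF t] by auto
  have tR: "\<theta> \<in> R" "\<theta> \<noteq> 0" using t P_R nzR by auto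
  have "\<theta> \<in> S"
  proof (rule ccontr)
    assume nS: "\<theta> \<notin> S"
    have ge: "(w \<mu> - \<theta>) \<bullet> a \<ge> 0" if a: "a \<in> S" for a
    proof -
      have "(w \<mu> + w \<alpha>0) \<bullet> coroot a \<ge> 0"
      proof (rule ccontr)
        assume "\<not> ?thesis"
        then have "a = - (w \<alpha>0)" using F[OF S_pos[OF a]] by simp
        then show False using Ft nS a by simp
      qed
      then have "(w \<mu> - \<theta>) \<bullet> coroot a \<ge> 0" using Ft by simp
      moreover have "a \<noteq> 0" using a nzS by blast
      ultimately show ?thesis using sign_coroot(1)[of a "w \<mu> - \<theta>"] by simp
    qed
    obtain c :: "'a \<Rightarrow> int" where c: "\<forall>b\<in>S. c b \<ge> 0" "\<theta> = (\<Sum>b\<in>S. of_int (c b) *\<^sub>R b)"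
      using t(1) unfolding pos_roots_def nonneg_int_comb_def by blast
    have "\<theta> \<bullet> \<theta> = (\<Sum>b\<in>S. of_int (c b) * (\<theta> \<bullet> b))" by (subst (2) c(2)) (simp add: inner_sum_right)
    also have "... \<le> (\<Sum>b\<in>S. of_int (c b) * (w \<mu> \<bullet> b))"
    proof (rule sum_mono)
      fix b assume b: "b \<in> S"
      have "\<theta> \<bullet> b \<le> w \<mu> \<bullet> b" using ge[OF b] by (simp add: inner_diff_left)
      then show "of_int (c b) * (\<theta> \<bullet> b) \<le> of_int (c b) * (w \<mu> \<bullet> b)"
        using c(1) b by (simp add: mult_left_mono)
    qed
    also have "... = w \<mu> \<bullet> \<theta>" by (simp add: c(2) inner_sum_right)
    also have "... = (\<theta> \<bullet> \<theta>) / 2" using Ft(2) tR(2) by (simp add: inner_coroot field_simps)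
    finally have "\<theta> \<bullet> \<theta> \<le> 0" by simp
    moreover have "0 < \<theta> \<bullet> \<theta>" using tR(2) by simp
    ultimately show False by linarith
  qed
  then show ?thesis using Ft by (intro bexI[of _ \<theta>]) auto
qed

lemma partiii:
  assumes d: "w \<mu> + w \<alpha>0 \<in> dominant R S" and n: "w \<alpha>0 \<in> neg_roots R S"
  shows "w \<mu> \<bullet> coroot (w \<alpha>0) \<le> -2"
proof -
  obtain \<theta> where t: "\<theta> \<in> P" "w \<alpha>0 = - \<theta>" using n unfolding neg_roots_def by blast
  have a0: "\<alpha>0 \<in> P" "\<alpha>0 \<noteq> 0" using al nzR unfolding is_alpha0_def pos_roots_def by auto
  have tnz: "\<theta> \<noteq> 0" using t P_R nzR by blast
  have "w \<mu> \<bullet> coroot (w \<alpha>0) < 0" using key[OF a0(1)] t by simp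
  have "(w \<mu> + w \<alpha>0) \<bullet> coroot \<theta> \<ge> 0" using d t(1) unfolding dominant_def by blast
  then have "w \<mu> \<bullet> coroot \<theta> \<ge> 2" using t(2) coroot_self[OF tnz] by (simp add: inner_add_left inner_diff_left)
  then show ?thesis using t(2) by simp
qed

lemma parti:
  assumes m: "minuscule R S \<omega>"
  shows "w \<mu> + w \<omega> \<in> dominant R S"
proof -
  have od: "\<omega> \<in> dominant R S" using m unfolding minuscule_def by blast
  have ow: "\<omega> \<in> weights R" using od unfolding dominant_def by blast
  have "w \<mu> + w \<omega> \<in> weights R" using weights_add lw w_weight[OF ow] by blast
  moreover have "(w \<mu> + w \<omega>) \<bullet> coroot \<beta> \<ge> 0" if bP: "\<beta> \<in> P" for \<beta>
  proof -
    have bR: "\<beta> \<in> R" using bP P_R by blast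
    obtain \<delta> where d: "\<delta> \<in> R" "w \<delta> = \<beta>" using weyl_pre[OF wW bR] by blast
    have e1: "w \<omega> \<bullet> coroot \<beta> = \<omega> \<bullet> coroot \<delta>" unfolding d(2)[symmetric] by (rule orth_inner_coroot[OF worth])
    have l0: "w \<mu> \<bullet> coroot \<beta> \<ge> 0" using lpos[OF bP] .
    show ?thesis
    proof (cases "\<delta> \<in> P")
      case True
      then have "\<omega> \<bullet> coroot \<delta> \<ge> 0" using od unfolding dominant_def by blast
      then show ?thesis using l0 e1 by (simp add: inner_add_left)
    next
      case False
      define \<gamma> where "\<gamma> = - \<delta>"
      have gP: "\<gamma> \<in> P" using False root_cases d(1) \<gamma>_def by blast
      have wg: "w \<gamma> = - \<beta>" using d(2) \<gamma>_def wneg by simp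
      have "w \<mu> \<bullet> coroot (w \<gamma>) < 0" using key[OF gP] wg bP by simp
      then have lp: "w \<mu> \<bullet> coroot \<beta> > 0" using wg by simp
      have l1: "w \<mu> \<bullet> coroot \<beta> \<ge> 1" using Ints_lt[OF Ints_0 lint[OF bR] lp] by simp
      have "\<omega> \<bullet> coroot \<gamma> \<in> {0, 1}" using m gP unfolding minuscule_def by blast
      then have "\<omega> \<bullet> coroot \<delta> \<ge> -1" using \<gamma>_def by auto
      then show ?thesis using l1 e1 by (simp add: inner_add_left)
    qed
  qed
  ultimately show ?thesis unfolding dominant_def by blast
qed

end

theorem mainTheorem20:
  fixes R S :: "'a::euclidean_space set" and \<alpha>0 \<mu> :: 'a and w :: "'a \<Rightarrow> 'a"
  assumes "root_system R" and "crystallographic R" and "reduced R" and "irreducible_rs R"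
    and "is_base R S" and "is_alpha0 R S \<alpha>0"
    and "\<mu> \<in> weights R" and "is_w_mu R S \<mu> w"
  shows "(\<forall>\<omega>. minuscule R S \<omega> \<longrightarrow> w \<mu> + w \<omega> \<in> dominant R S)
    \<and> (w \<mu> + w \<alpha>0 \<notin> dominant R S \<longrightarrow>
         (\<exists>\<alpha>j\<in>S. w \<alpha>0 = - \<alpha>j \<and> w \<mu> \<bullet> coroot \<alpha>j = 1))
    \<and> (w \<mu> + w \<alpha>0 \<in> dominant R S \<and> w \<alpha>0 \<in> neg_roots R S \<longrightarrow>
         w \<mu> \<bullet> coroot (w \<alpha>0) \<le> -2)"
proof -
  interpret m: mainloc R S \<alpha>0 \<mu> w
    using assms(1,2,3,5,6,8) by (intro mainloc.intro rs.intro mainloc_axioms.intro)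
  show ?thesis using m.parti m.partii m.partiii by blast
qed

end
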